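(* Let $\tau$ be a $\sigma$-maxitive measure on a $\sigma$-algebra $\mathcal{B}$ on a nonempty set $E$. The following conditions are equivalent: 1. $\tau$ is $\sigma$-principal; 2. $\tau$ satisfies the countable chain condition; 3. the quotient space $\mathcal{B}/\tau$ is $\sigma$-principal, i.e. every $\sigma$-ideal of the $\sigma$-complete lattice $\mathcal{B}/\tau$ is a principal ideal; 4. there is a $\sigma$-principal $\sigma$-additive measure $m$ on $\mathcal{B}$ such that, for all $B\in\mathcal{B}$, $m(B)=0$ if and only if $\tau(B)=0$.
   Context: A $\sigma$-maxitive measure on $\mathcal{B}$ is a map $\tau:\mathcal{B}\to[0,\infty]$ with $\tau(\emptyset)=0$ and $\tau(\bigcup_j B_j)=\sup_j\tau(B_j)$ for every countable family $(B_j)$ in $\mathcal{B}$. A set $N\subset E$ is $\tau$-negligible if $N\subset B$ for some $B\in\mathcal{B}$ with $\tau(B)=0$; analogously for $m$. A $\sigma$-ideal of $\mathcal{B}$ is a nonempty subfamily closed under countable unions and such that $A\subset B\in\mathcal{I}$ with $A\in\mathcal{B}$ implies $A\in\mathcal{I}$. A monotone set function $\mu$ on $\mathcal{B}$ is $\sigma$-principal if for every $\sigma$-ideal $\mathcal{I}$ of $\mathcal{B}$ there is $L\in\mathcal{I}$ such that $S\setminus L$ is $\mu$-negligible for all $S\in\mathcal{I}$. $\tau$ satisfies the countable chain condition if every family of pairwise disjoint, non-$\tau$-negligible elements of $\mathcal{B}$ is countable. Quotient space: on $\mathcal{B}$ put $A\sim B$ if $A\cup N=B\cup N$ for some $\tau$-negligible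 $N$. Write $B^\tau$ for the class of $B$ and $\mathcal{B}/\tau$ for the set of classes, ordered by $A^\tau\le B^\tau$ iff $A\subset B\cup N$ for some $\tau$-negligible $N$; this is a $\sigma$-complete lattice. A $\sigma$-ideal of $\mathcal{B}/\tau$ is a nonempty down-closed subset closed under countable suprema. It is principal if it equals $\{x: x\le L^\tau\}$ for some $L$. *)

theory Defs
  imports "HOL-Analysis.Analysis"
begin

definition sigma_maxitive :: "'a set set \<Rightarrow> ('a set \<Rightarrow> ennreal) \<Rightarrow> bool" where
  "sigma_maxitive B \<tau> \<longleftrightarrow> \<tau> {} = 0 \<and>
     (\<forall>Bs :: nat \<Rightarrow> 'a set. range Bs \<subseteq> B \<longrightarrow> \<tau> (\<Union>j. Bs j) = (SUP j. \<tau> (Bs j)))"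

definition negligible :: "'a set set \<Rightarrow> ('a set \<Rightarrow> ennreal) \<Rightarrow> 'a set \<Rightarrow> bool" where
  "negligible B \<mu> N \<longleftrightarrow> (\<exists>C\<in>B. N \<subseteq> C \<and> \<mu> C = 0)"

definition sigma_ideal :: "'a set set \<Rightarrow> 'a set set \<Rightarrow> bool" where
  "sigma_ideal B I \<longleftrightarrow> I \<subseteq> B \<and> I \<noteq> {} \<and>
     (\<forall>Ss :: nat \<Rightarrow> 'a set. range Ss \<subseteq> I \<longrightarrow> (\<Union>j. Ss j) \<in> I) \<and>
     (\<forall>A C. A \<in> B \<longrightarrow> C \<in> I \<longrightarrow> A \<subseteq> C \<longrightarrow> A \<in> I)"

definition sigma_principal :: "'a set set \<Rightarrow> ('a set \<Rightarrow> ennreal) \<Rightarrow> bool" where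
  "sigma_principal B \<mu> \<longleftrightarrow>
     (\<forall>I. sigma_ideal B I \<longrightarrow> (\<exists>L\<in>I. \<forall>S\<in>I. negligible B \<mu> (S - L)))"

definition countable_chain_condition :: "'a set set \<Rightarrow> ('a set \<Rightarrow> ennreal) \<Rightarrow> bool" where
  "countable_chain_condition B \<tau> \<longleftrightarrow>
     (\<forall>F. F \<subseteq> B \<longrightarrow> disjoint F \<longrightarrow> (\<forall>A\<in>F. \<not> negligible B \<tau> A) \<longrightarrow> countable F)"

definition tau_equiv :: "'a set set \<Rightarrow> ('a set \<Rightarrow> ennreal) \<Rightarrow> ('a set \<times> 'a set) set" where
  "tau_equiv B \<tau> = {(A, C). A \<in> B \<and> C \<in> B \<and> (\<exists>N. negligible B \<tau> N \<and> A \<union> N = C \<union> N)}"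

definition quotient_space :: "'a set set \<Rightarrow> ('a set \<Rightarrow> ennreal) \<Rightarrow> 'a set set set" where
  "quotient_space B \<tau> = B // tau_equiv B \<tau>"

definition qclass :: "'a set set \<Rightarrow> ('a set \<Rightarrow> ennreal) \<Rightarrow> 'a set \<Rightarrow> 'a set set" where
  "qclass B \<tau> A = tau_equiv B \<tau> `` {A}"

definition qle :: "'a set set \<Rightarrow> ('a set \<Rightarrow> ennreal) \<Rightarrow> 'a set set \<Rightarrow> 'a set set \<Rightarrow> bool" where
  "qle B \<tau> x y \<longleftrightarrow> (\<exists>A\<in>x. \<exists>C\<in>y. \<exists>N. negligible B \<tau> N \<and> A \<subseteq> C \<union> N)"

definition q_is_lub :: "'a set set \<Rightarrow> ('a set \<Rightarrow> ennreal) \<Rightarrow> 'a set set set \<Rightarrow> 'a set set \<Rightarrow> bool" where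
  "q_is_lub B \<tau> X s \<longleftrightarrow> s \<in> quotient_space B \<tau> \<and> (\<forall>x\<in>X. qle B \<tau> x s) \<and>
     (\<forall>u\<in>quotient_space B \<tau>. (\<forall>x\<in>X. qle B \<tau> x u) \<longrightarrow> qle B \<tau> s u)"

definition q_sigma_ideal :: "'a set set \<Rightarrow> ('a set \<Rightarrow> ennreal) \<Rightarrow> 'a set set set \<Rightarrow> bool" where
  "q_sigma_ideal B \<tau> J \<longleftrightarrow> J \<subseteq> quotient_space B \<tau> \<and> J \<noteq> {} \<and>
     (\<forall>x y. x \<in> quotient_space B \<tau> \<longrightarrow> y \<in> J \<longrightarrow> qle B \<tau> x y \<longrightarrow> x \<in> J) \<and>
     (\<forall>xs :: nat \<Rightarrow> 'a set set. \<forall>s. range xs \<subseteq> J \<longrightarrow> q_is_lub B \<tau> (range xs) s \<longrightarrow> s \<in> J)"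

definition quotient_sigma_principal :: "'a set set \<Rightarrow> ('a set \<Rightarrow> ennreal) \<Rightarrow> bool" where
  "quotient_sigma_principal B \<tau> \<longleftrightarrow>
     (\<forall>J. q_sigma_ideal B \<tau> J \<longrightarrow>
        (\<exists>L\<in>B. J = {x \<in> quotient_space B \<tau>. qle B \<tau> x (qclass B \<tau> L)}))"

end

theory Submission
  imports Defs
begin

lemma sa_empty: "sigma_algebra E B \<Longrightarrow> {} \<in> B"
proof -
  assume "sigma_algebra E B" then interpret sigma_algebra E B .
  show ?thesis by simp
qed

lemma sa_UN: "sigma_algebra E B \<Longrightarrow> (\<And>j::nat. C j \<in> B) \<Longrightarrow> (\<Union>j. C j) \<in> B"
proof -
  assume "sigma_algebra E B" "\<And>j::nat. C j \<in> B" then interpret sigma_algebra E B by simp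
  show ?thesis using \<open>\<And>j::nat. C j \<in> B\<close> by auto
qed

lemma sa_Diff: "sigma_algebra E B \<Longrightarrow> A \<in> B \<Longrightarrow> C \<in> B \<Longrightarrow> A - C \<in> B"
proof -
  assume "sigma_algebra E B" "A \<in> B" "C \<in> B" then interpret sigma_algebra E B by simp
  show ?thesis using \<open>A \<in> B\<close> \<open>C \<in> B\<close> by auto
qed

lemma neg_empty:
  assumes "sigma_algebra E B" "sigma_maxitive B \<tau>"
  shows "negligible B \<tau> {}"
proof -
  have "\<tau> {} = 0" using assms(2) unfolding sigma_maxitive_def by simp
  thus ?thesis unfolding negligible_def using sa_empty[OF assms(1)] by blast
qed

lemma neg_mono: "negligible B \<tau> N \<Longrightarrow> M \<subseteq> N \<Longrightarrow> negligible B \<tau> M"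
  unfolding negligible_def by blast

lemma neg_UN:
  assumes sa: "sigma_algebra E B" and mx: "sigma_maxitive B \<tau>"
    and N: "\<And>j::nat. negligible B \<tau> (N j)"
  shows "negligible B \<tau> (\<Union>j. N j)"
proof -
  from N have "\<forall>j. \<exists>C. C \<in> B \<and> N j \<subseteq> C \<and> \<tau> C = 0" unfolding negligible_def by blast
  then obtain C where C: "\<And>j. C j \<in> B \<and> N j \<subseteq> C j \<and> \<tau> (C j) = 0" by metis
  have "(\<Union>j. C j) \<in> B" using C sa by (simp add: sa_UN)
  moreover have "\<tau> (\<Union>j. C j) = 0" using mx C unfolding sigma_maxitive_def
    by (metis (no_types, lifting) SUP_bot_conv(2) bot_ennreal image_subsetI)
  ultimately show ?thesis unfolding negligible_def using C by blast
qed

lemma neg_Un: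
  assumes sa: "sigma_algebra E B" and mx: "sigma_maxitive B \<tau>"
    and "negligible B \<tau> N1" "negligible B \<tau> N2"
  shows "negligible B \<tau> (N1 \<union> N2)"
proof -
  have "N1 \<union> N2 = (\<Union>j::nat. if j = 0 then N1 else N2)" by (auto split: if_splits)
  moreover have "negligible B \<tau> (\<Union>j::nat. if j = 0 then N1 else N2)"
    by (rule neg_UN[OF sa mx]) (use assms in auto)
  ultimately show ?thesis by simp
qed

lemma P1_P2:
  assumes sa: "sigma_algebra E B" and mx: "sigma_maxitive B \<tau>"
    and p: "sigma_principal B \<tau>"
  shows "countable_chain_condition B \<tau>"
  unfolding countable_chain_condition_def
proof (intro allI impI)
  fix F assume FB: "F \<subseteq> B" and dF: "disjoint F" and nn: "\<forall>A\<in>F. \<not> negligible B \<tau> A"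
  define I where "I = {A\<in>B. \<exists>G. G \<subseteq> F \<and> countable G \<and> A \<subseteq> \<Union>G}"
  have "sigma_ideal B I"
    unfolding sigma_ideal_def
  proof (intro conjI allI impI)
    show "I \<subseteq> B" unfolding I_def by auto
    have "{} \<in> I" unfolding I_def using sa_empty[OF sa] by blast
    thus "I \<noteq> {}" by blast
  next
    fix Ss :: "nat \<Rightarrow> 'a set" assume r: "range Ss \<subseteq> I"
    hence "\<forall>j. \<exists>G. G \<subseteq> F \<and> countable G \<and> Ss j \<subseteq> \<Union>G" unfolding I_def by blast
    then obtain G where G: "\<And>j. G j \<subseteq> F \<and> countable (G j) \<and> Ss j \<subseteq> \<Union>(G j)" by metis
    have "\<And>j. Ss j \<in> B" using r unfolding I_def by blast
    hence "(\<Union>j. Ss j) \<in> B" by (rule sa_UN[OF sa])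
    moreover have "(\<Union>j. G j) \<subseteq> F"
    proof -
      have "\<forall>j. G j \<subseteq> F" using G by simp
      thus ?thesis by blast
    qed
    moreover have "countable (\<Union>j. G j)" using G by (simp add: countable_UN)
    moreover have "(\<Union>j. Ss j) \<subseteq> \<Union>(\<Union>j. G j)"
    proof -
      have "\<forall>j. Ss j \<subseteq> \<Union>(G j)" using G by simp
      thus ?thesis by blast
    qed
    ultimately show "(\<Union>j. Ss j) \<in> I" unfolding I_def by blast
  next
    fix A C assume "A \<in> B" "C \<in> I" "A \<subseteq> C" thus "A \<in> I" unfolding I_def by blast
  qed
  with p obtain L where L: "L \<in> I" and Lp: "\<forall>S\<in>I. negligible B \<tau> (S - L)"
    unfolding sigma_principal_def by blast
  from L obtain G0 where G0: "G0 \<subseteq> F" "countable G0" "L \<subseteq> \<Union>G0" unfolding I_def by blast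
  have "F \<subseteq> G0"
  proof
    fix S assume S: "S \<in> F"
    have "{S} \<subseteq> F \<and> countable {S} \<and> S \<subseteq> \<Union>{S}" using S by simp
    hence "S \<in> I" unfolding I_def using FB S by blast
    hence ng: "negligible B \<tau> (S - L)" using Lp by blast
    show "S \<in> G0"
    proof (rule ccontr)
      assume "S \<notin> G0"
      have "\<And>X. X \<in> G0 \<Longrightarrow> S \<inter> X = {}"
      proof -
        fix X assume X: "X \<in> G0"
        hence "X \<in> F" "X \<noteq> S" using G0(1) \<open>S \<notin> G0\<close> by auto
        thus "S \<inter> X = {}" using dF S unfolding disjoint_def by auto
      qed
      hence "S \<inter> \<Union>G0 = {}" by blast
      hence "S - L = S" using G0(3) by blast
      thus False using ng nn S by simp
    qed
  qed
  thus "countable F" using G0(2) countable_subset by blast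
qed

lemma P2_P1:
  assumes sa: "sigma_algebra E B" and mx: "sigma_maxitive B \<tau>"
    and c: "countable_chain_condition B \<tau>"
  shows "sigma_principal B \<tau>"
  unfolding sigma_principal_def
proof (intro allI impI)
  fix I assume I: "sigma_ideal B I"
  have IB: "I \<subseteq> B" using I unfolding sigma_ideal_def by blast
  have Iun: "\<And>Ss :: nat \<Rightarrow> 'a set. range Ss \<subseteq> I \<Longrightarrow> (\<Union>j. Ss j) \<in> I"
    using I unfolding sigma_ideal_def by blast
  have Idown: "\<And>A C. A \<in> B \<Longrightarrow> C \<in> I \<Longrightarrow> A \<subseteq> C \<Longrightarrow> A \<in> I"
    using I unfolding sigma_ideal_def by blast
  have Ine: "I \<noteq> {}" using I unfolding sigma_ideal_def by blast
  have emptyI: "{} \<in> I"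
  proof -
    obtain C where "C \<in> I" using Ine by blast
    thus ?thesis using Idown[of "{}" C] sa_empty[OF sa] by simp
  qed
  define \<A> where "\<A> = {F. F \<subseteq> I \<and> disjoint F \<and> (\<forall>A\<in>F. \<not> negligible B \<tau> A)}"
  have "\<forall>C\<in>chains \<A>. \<Union>C \<in> \<A>"
  proof
    fix C assume C: "C \<in> chains \<A>"
    hence CA: "C \<subseteq> \<A>" and ch: "\<forall>X\<in>C. \<forall>Y\<in>C. X \<subseteq> Y \<or> Y \<subseteq> X"
      unfolding chains_def chain_subset_def by auto
    have "\<Union>C \<subseteq> I" using CA unfolding \<A>_def by blast
    moreover have "\<forall>A\<in>\<Union>C. \<not> negligible B \<tau> A" using CA unfolding \<A>_def by blast
    moreover have "disjoint (\<Union>C)"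
      unfolding disjoint_def
    proof (intro ballI impI)
      fix X Y assume X: "X \<in> \<Union>C" and Y: "Y \<in> \<Union>C" and ne: "X \<noteq> Y"
      then obtain F1 F2 where F1: "F1 \<in> C" "X \<in> F1" and F2: "F2 \<in> C" "Y \<in> F2" by blast
      have "F1 \<subseteq> F2 \<or> F2 \<subseteq> F1" using ch F1 F2 by blast
      then obtain F where "F \<in> C" "X \<in> F" "Y \<in> F" using F1 F2 by blast
      hence "disjoint F" using CA unfolding \<A>_def by blast
      thus "X \<inter> Y = {}" using \<open>X \<in> F\<close> \<open>Y \<in> F\<close> ne unfolding disjoint_def by blast
    qed
    ultimately show "\<Union>C \<in> \<A>" unfolding \<A>_def by blast
  qed
  from Zorn_Lemma[OF this] obtain M where M: "M \<in> \<A>" and Mmax: "\<forall>X\<in>\<A>. M \<subseteq> X \<longrightarrow> X = M"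
    by blast
  have MI: "M \<subseteq> I" and Md: "disjoint M" and Mn: "\<forall>A\<in>M. \<not> negligible B \<tau> A"
    using M unfolding \<A>_def by auto
  have "countable M" using c MI IB Md Mn unfolding countable_chain_condition_def by blast
  have LI: "\<Union>M \<in> I"
  proof (cases "M = {}")
    case True thus ?thesis using emptyI by simp
  next
    case False
    have "range (from_nat_into M) = M" using False \<open>countable M\<close> by simp
    hence "(\<Union>j. from_nat_into M j) = \<Union>M" by simp
    moreover have "(\<Union>j. from_nat_into M j) \<in> I"
      using Iun[of "from_nat_into M"] \<open>range (from_nat_into M) = M\<close> MI by argo
    ultimately show ?thesis by simp
  qed
  show "\<exists>L\<in>I. \<forall>S\<in>I. negligible B \<tau> (S - L)"
  proof (intro bexI[OF _ LI] ballI)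
    fix S assume S: "S \<in> I"
    show "negligible B \<tau> (S - \<Union>M)"
    proof (rule ccontr)
      assume nn: "\<not> negligible B \<tau> (S - \<Union>M)"
      have SLB: "S - \<Union>M \<in> B" using S LI IB sa_Diff[OF sa] by blast
      hence SLI: "S - \<Union>M \<in> I" using Idown[OF SLB S] by blast
      have "disjoint (insert (S - \<Union>M) M)"
        unfolding disjoint_def
      proof (intro ballI impI)
        fix X Y assume X: "X \<in> insert (S - \<Union>M) M" and Y: "Y \<in> insert (S - \<Union>M) M" and ne: "X \<noteq> Y"
        show "X \<inter> Y = {}"
        proof (cases "X \<in> M \<and> Y \<in> M")
          case True thus ?thesis using Md ne unfolding disjoint_def by blast
        next
          case False thus ?thesis using X Y ne by blast
        qed
      qed
      hence "insert (S - \<Union>M) M \<in> \<A>" using SLI MI Mn nn unfolding \<A>_def by blast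
      hence "insert (S - \<Union>M) M = M" using Mmax by blast
      hence "S - \<Union>M \<in> M" by blast
      hence "S - \<Union>M = {}" by blast
      thus False using nn neg_empty[OF sa mx] by metis
    qed
  qed
qed

definition sub :: "'a set set \<Rightarrow> ('a set \<Rightarrow> ennreal) \<Rightarrow> 'a set \<Rightarrow> 'a set \<Rightarrow> bool" where
  "sub B \<tau> A C \<longleftrightarrow> (\<exists>N. negligible B \<tau> N \<and> A \<subseteq> C \<union> N)"

lemma sub_mono:
  assumes sa: "sigma_algebra E B" and mx: "sigma_maxitive B \<tau>" and "A \<subseteq> C"
  shows "sub B \<tau> A C"
  unfolding sub_def using neg_empty[OF sa mx] assms(3) by blast

lemma sub_refl:
  assumes sa: "sigma_algebra E B" and mx: "sigma_maxitive B \<tau>"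
  shows "sub B \<tau> A A"
  using sub_mono[OF sa mx] by blast

lemma sub_trans:
  assumes sa: "sigma_algebra E B" and mx: "sigma_maxitive B \<tau>"
    and "sub B \<tau> A C" "sub B \<tau> C D"
  shows "sub B \<tau> A D"
proof -
  obtain N1 where N1: "negligible B \<tau> N1" "A \<subseteq> C \<union> N1" using assms(3) unfolding sub_def by blast
  obtain N2 where N2: "negligible B \<tau> N2" "C \<subseteq> D \<union> N2" using assms(4) unfolding sub_def by blast
  have "negligible B \<tau> (N1 \<union> N2)" using neg_Un[OF sa mx N1(1) N2(1)] .
  moreover have "A \<subseteq> D \<union> (N1 \<union> N2)" using N1(2) N2(2) by blast
  ultimately show ?thesis unfolding sub_def by blast
qed

lemma sub_UN:
  assumes sa: "sigma_algebra E B" and mx: "sigma_maxitive B \<tau>"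
    and S: "\<And>j::nat. sub B \<tau> (S j) U"
  shows "sub B \<tau> (\<Union>j. S j) U"
proof -
  have "\<forall>j. \<exists>N. negligible B \<tau> N \<and> S j \<subseteq> U \<union> N" using S unfolding sub_def by blast
  then obtain N where N: "\<And>j. negligible B \<tau> (N j)" "\<And>j. S j \<subseteq> U \<union> N j" by metis
  have "negligible B \<tau> (\<Union>j. N j)" using neg_UN[OF sa mx N(1)] .
  moreover have "(\<Union>j. S j) \<subseteq> U \<union> (\<Union>j. N j)" using N(2) by blast
  ultimately show ?thesis unfolding sub_def by blast
qed

lemma R_iff:
  assumes sa: "sigma_algebra E B" and mx: "sigma_maxitive B \<tau>"
  shows "(A, C) \<in> tau_equiv B \<tau> \<longleftrightarrow> A \<in> B \<and> C \<in> B \<and> sub B \<tau> A C \<and> sub B \<tau> C A"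
proof
  assume "(A, C) \<in> tau_equiv B \<tau>"
  then obtain N where "A \<in> B" "C \<in> B" "negligible B \<tau> N" "A \<union> N = C \<union> N"
    unfolding tau_equiv_def by blast
  thus "A \<in> B \<and> C \<in> B \<and> sub B \<tau> A C \<and> sub B \<tau> C A" unfolding sub_def by blast
next
  assume h: "A \<in> B \<and> C \<in> B \<and> sub B \<tau> A C \<and> sub B \<tau> C A"
  obtain N1 where N1: "negligible B \<tau> N1" "A \<subseteq> C \<union> N1" using h unfolding sub_def by blast
  obtain N2 where N2: "negligible B \<tau> N2" "C \<subseteq> A \<union> N2" using h unfolding sub_def by blast
  have "negligible B \<tau> (N1 \<union> N2)" using neg_Un[OF sa mx N1(1) N2(1)] .
  moreover have "A \<union> (N1 \<union> N2) = C \<union> (N1 \<union> N2)" using N1(2) N2(2) by blast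
  ultimately show "(A, C) \<in> tau_equiv B \<tau>" unfolding tau_equiv_def using h by blast
qed

lemma qclass_mem: "C \<in> qclass B \<tau> A \<longleftrightarrow> (A, C) \<in> tau_equiv B \<tau>"
  unfolding qclass_def by blast

lemma quot_iff: "x \<in> quotient_space B \<tau> \<longleftrightarrow> (\<exists>A\<in>B. x = qclass B \<tau> A)"
  unfolding quotient_space_def qclass_def quotient_def by blast

lemma self_mem:
  assumes sa: "sigma_algebra E B" and mx: "sigma_maxitive B \<tau>" and "A \<in> B"
  shows "A \<in> qclass B \<tau> A"
  using assms(3) sub_refl[OF sa mx] unfolding qclass_mem R_iff[OF sa mx] by blast

lemma qle_iff:
  assumes sa: "sigma_algebra E B" and mx: "sigma_maxitive B \<tau>" and AB: "A \<in> B" and CB: "C \<in> B"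
  shows "qle B \<tau> (qclass B \<tau> A) (qclass B \<tau> C) \<longleftrightarrow> sub B \<tau> A C"
proof
  assume "qle B \<tau> (qclass B \<tau> A) (qclass B \<tau> C)"
  then obtain A' C' where A': "A' \<in> qclass B \<tau> A" and C': "C' \<in> qclass B \<tau> C"
    and s: "sub B \<tau> A' C'" unfolding qle_def sub_def by blast
  have 1: "sub B \<tau> A A'" using A' unfolding qclass_mem R_iff[OF sa mx] by blast
  have 2: "sub B \<tau> C' C" using C' unfolding qclass_mem R_iff[OF sa mx] by blast
  show "sub B \<tau> A C" using sub_trans[OF sa mx sub_trans[OF sa mx 1 s] 2] .
next
  assume "sub B \<tau> A C"
  thus "qle B \<tau> (qclass B \<tau> A) (qclass B \<tau> C)"
    unfolding qle_def sub_def using self_mem[OF sa mx AB] self_mem[OF sa mx CB] by blast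
qed

lemma qclass_in: "A \<in> B \<Longrightarrow> qclass B \<tau> A \<in> quotient_space B \<tau>"
  unfolding quot_iff by blast

lemma P1_P3:
  assumes sa: "sigma_algebra E B" and mx: "sigma_maxitive B \<tau>"
    and p: "sigma_principal B \<tau>"
  shows "quotient_sigma_principal B \<tau>"
  unfolding quotient_sigma_principal_def
proof (intro allI impI)
  fix J assume J: "q_sigma_ideal B \<tau> J"
  note Jc = J[unfolded q_sigma_ideal_def]
  have JQ: "J \<subseteq> quotient_space B \<tau>" using Jc by (rule conjunct1)
  have Jne: "J \<noteq> {}" using Jc[THEN conjunct2] by (rule conjunct1)
  have Jdown: "\<And>x y. x \<in> quotient_space B \<tau> \<Longrightarrow> y \<in> J \<Longrightarrow> qle B \<tau> x y \<Longrightarrow> x \<in> J"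
    using Jc[THEN conjunct2, THEN conjunct2, THEN conjunct1] by simp
  have Jsup: "\<And>(xs :: nat \<Rightarrow> 'a set set) s. range xs \<subseteq> J \<Longrightarrow> q_is_lub B \<tau> (range xs) s \<Longrightarrow> s \<in> J"
  proof -
    fix xs :: "nat \<Rightarrow> 'a set set" and s assume a: "range xs \<subseteq> J" and b: "q_is_lub B \<tau> (range xs) s"
    have h: "\<forall>xs :: nat \<Rightarrow> 'a set set. \<forall>s. range xs \<subseteq> J \<longrightarrow> q_is_lub B \<tau> (range xs) s \<longrightarrow> s \<in> J"
      using Jc[THEN conjunct2, THEN conjunct2, THEN conjunct2] .
    show "s \<in> J" using h[rule_format, OF a b] .
  qed
  define I where "I = {A\<in>B. qclass B \<tau> A \<in> J}"
  have "sigma_ideal B I"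
    unfolding sigma_ideal_def
  proof (intro conjI allI impI)
    show "I \<subseteq> B" unfolding I_def by blast
    obtain x where "x \<in> J" using Jne by blast
    then obtain A where "A \<in> B" "x = qclass B \<tau> A" using JQ quot_iff by blast
    hence "A \<in> I" unfolding I_def using \<open>x \<in> J\<close> by blast
    thus "I \<noteq> {}" by blast
  next
    fix A C assume A: "A \<in> B" and C: "C \<in> I" and AC: "A \<subseteq> C"
    have CB: "C \<in> B" and CJ: "qclass B \<tau> C \<in> J" using C unfolding I_def by auto
    have "qle B \<tau> (qclass B \<tau> A) (qclass B \<tau> C)"
      using qle_iff[OF sa mx A CB] sub_mono[OF sa mx AC] by blast
    hence "qclass B \<tau> A \<in> J" using Jdown[OF qclass_in[OF A] CJ] by blast
    thus "A \<in> I" unfolding I_def using A by blast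
  next
    fix Ss :: "nat \<Rightarrow> 'a set" assume r: "range Ss \<subseteq> I"
    have SB: "\<And>j. Ss j \<in> B" using r unfolding I_def by blast
    have SJ: "\<And>j. qclass B \<tau> (Ss j) \<in> J" using r unfolding I_def by blast
    have UB: "(\<Union>j. Ss j) \<in> B" using sa_UN[OF sa SB] .
    have "q_is_lub B \<tau> (range (\<lambda>j. qclass B \<tau> (Ss j))) (qclass B \<tau> (\<Union>j. Ss j))"
      unfolding q_is_lub_def
    proof (intro conjI ballI impI)
      show "qclass B \<tau> (\<Union>j. Ss j) \<in> quotient_space B \<tau>" using qclass_in[OF UB] .
    next
      fix x assume "x \<in> range (\<lambda>j. qclass B \<tau> (Ss j))"
      then obtain j where x: "x = qclass B \<tau> (Ss j)" by blast
      have "sub B \<tau> (Ss j) (\<Union>j. Ss j)" using sub_mono[OF sa mx] by blast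
      thus "qle B \<tau> x (qclass B \<tau> (\<Union>j. Ss j))" using x qle_iff[OF sa mx SB UB] by blast
    next
      fix u assume u: "u \<in> quotient_space B \<tau>"
        and ub: "\<forall>x\<in>range (\<lambda>j. qclass B \<tau> (Ss j)). qle B \<tau> x u"
      obtain U where UB': "U \<in> B" and uU: "u = qclass B \<tau> U" using u quot_iff by blast
      have "\<And>j. sub B \<tau> (Ss j) U"
      proof -
        fix j
        have "qle B \<tau> (qclass B \<tau> (Ss j)) u" using ub by blast
        thus "sub B \<tau> (Ss j) U" using qle_iff[OF sa mx SB UB'] uU by blast
      qed
      hence "sub B \<tau> (\<Union>j. Ss j) U" using sub_UN[OF sa mx] by blast
      thus "qle B \<tau> (qclass B \<tau> (\<Union>j. Ss j)) u" using qle_iff[OF sa mx UB UB'] uU by blast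
    qed
    moreover have "range (\<lambda>j. qclass B \<tau> (Ss j)) \<subseteq> J" using SJ by blast
    ultimately have "qclass B \<tau> (\<Union>j. Ss j) \<in> J" using Jsup by blast
    thus "(\<Union>j. Ss j) \<in> I" unfolding I_def using UB by blast
  qed
  with p obtain L where L: "L \<in> I" and Lp: "\<forall>S\<in>I. negligible B \<tau> (S - L)"
    unfolding sigma_principal_def by blast
  have LB: "L \<in> B" and LJ: "qclass B \<tau> L \<in> J" using L unfolding I_def by auto
  show "\<exists>L\<in>B. J = {x \<in> quotient_space B \<tau>. qle B \<tau> x (qclass B \<tau> L)}"
  proof (intro bexI[OF _ LB] set_eqI iffI)
    fix x assume xJ: "x \<in> J"
    then obtain S where SB: "S \<in> B" and xS: "x = qclass B \<tau> S" using JQ quot_iff by blast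
    hence "S \<in> I" unfolding I_def using xJ by blast
    hence "negligible B \<tau> (S - L)" using Lp by blast
    hence "sub B \<tau> S L" unfolding sub_def by blast
    hence "qle B \<tau> x (qclass B \<tau> L)" using qle_iff[OF sa mx SB LB] xS by blast
    thus "x \<in> {x \<in> quotient_space B \<tau>. qle B \<tau> x (qclass B \<tau> L)}" using xJ JQ by blast
  next
    fix x assume "x \<in> {x \<in> quotient_space B \<tau>. qle B \<tau> x (qclass B \<tau> L)}"
    thus "x \<in> J" using Jdown LJ by blast
  qed
qed

lemma P3_P1:
  assumes sa: "sigma_algebra E B" and mx: "sigma_maxitive B \<tau>"
    and p: "quotient_sigma_principal B \<tau>"
  shows "sigma_principal B \<tau>"
  unfolding sigma_principal_def
proof (intro allI impI)
  fix I assume I: "sigma_ideal B I"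
  have IB: "I \<subseteq> B" using I unfolding sigma_ideal_def by blast
  have Iun: "\<And>Ss :: nat \<Rightarrow> 'a set. range Ss \<subseteq> I \<Longrightarrow> (\<Union>j. Ss j) \<in> I"
    using I unfolding sigma_ideal_def by blast
  have Ine: "I \<noteq> {}" using I unfolding sigma_ideal_def by blast
  define J where "J = {x \<in> quotient_space B \<tau>. \<exists>A\<in>I. qle B \<tau> x (qclass B \<tau> A)}"
  have Jiff: "\<And>X. X \<in> B \<Longrightarrow> qclass B \<tau> X \<in> J \<longleftrightarrow> (\<exists>A\<in>I. sub B \<tau> X A)"
  proof -
    fix X assume X: "X \<in> B"
    have "qclass B \<tau> X \<in> J \<longleftrightarrow> (\<exists>A\<in>I. qle B \<tau> (qclass B \<tau> X) (qclass B \<tau> A))"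
      unfolding J_def using qclass_in[OF X] by blast
    also have "\<dots> \<longleftrightarrow> (\<exists>A\<in>I. sub B \<tau> X A)"
      using qle_iff[OF sa mx X] IB by blast
    finally show "qclass B \<tau> X \<in> J \<longleftrightarrow> (\<exists>A\<in>I. sub B \<tau> X A)" .
  qed
  have "q_sigma_ideal B \<tau> J"
    unfolding q_sigma_ideal_def
  proof (intro conjI allI impI)
    show "J \<subseteq> quotient_space B \<tau>" unfolding J_def by blast
    obtain A where A: "A \<in> I" using Ine by blast
    hence "A \<in> B" using IB by blast
    hence "qclass B \<tau> A \<in> J" using Jiff A sub_refl[OF sa mx] by blast
    thus "J \<noteq> {}" by blast
  next
    fix x y assume x: "x \<in> quotient_space B \<tau>" and y: "y \<in> J" and xy: "qle B \<tau> x y"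
    obtain X where XB: "X \<in> B" and xX: "x = qclass B \<tau> X" using x quot_iff by blast
    obtain Y where YB: "Y \<in> B" and yY: "y = qclass B \<tau> Y" using y quot_iff unfolding J_def by blast
    obtain A where A: "A \<in> I" "sub B \<tau> Y A" using Jiff[OF YB] y yY by blast
    have "sub B \<tau> X Y" using qle_iff[OF sa mx XB YB] xy xX yY by blast
    hence "sub B \<tau> X A" using sub_trans[OF sa mx _ A(2)] by blast
    thus "x \<in> J" using Jiff[OF XB] A(1) xX by blast
  next
    fix xs :: "nat \<Rightarrow> 'a set set" and s
    assume r: "range xs \<subseteq> J" and lub: "q_is_lub B \<tau> (range xs) s"
    have "\<forall>j. \<exists>X A. X \<in> B \<and> xs j = qclass B \<tau> X \<and> A \<in> I \<and> sub B \<tau> X A"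
    proof
      fix j
      have xj: "xs j \<in> J" using r by blast
      then obtain X where XB: "X \<in> B" and xX: "xs j = qclass B \<tau> X" using quot_iff unfolding J_def by blast
      then obtain A where "A \<in> I" "sub B \<tau> X A" using Jiff[OF XB] xj by metis
      thus "\<exists>X A. X \<in> B \<and> xs j = qclass B \<tau> X \<and> A \<in> I \<and> sub B \<tau> X A" using XB xX by blast
    qed
    then obtain X A where XA: "\<And>j. X j \<in> B \<and> xs j = qclass B \<tau> (X j) \<and> A j \<in> I \<and> sub B \<tau> (X j) (A j)"
      by metis
    have AI: "(\<Union>j. A j) \<in> I" using Iun XA by blast
    hence AB: "(\<Union>j. A j) \<in> B" using IB by blast
    have "\<forall>x\<in>range xs. qle B \<tau> x (qclass B \<tau> (\<Union>j. A j))"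
    proof
      fix x assume "x \<in> range xs"
      then obtain j where j: "x = xs j" by blast
      have "sub B \<tau> (A j) (\<Union>j. A j)" using sub_mono[OF sa mx] by blast
      hence "sub B \<tau> (X j) (\<Union>j. A j)" using sub_trans[OF sa mx] XA by blast
      thus "qle B \<tau> x (qclass B \<tau> (\<Union>j. A j))" using qle_iff[OF sa mx _ AB] XA j by metis
    qed
    hence sq: "qle B \<tau> s (qclass B \<tau> (\<Union>j. A j))"
      using lub qclass_in[OF AB] unfolding q_is_lub_def by blast
    have sQ: "s \<in> quotient_space B \<tau>" using lub unfolding q_is_lub_def by blast
    thus "s \<in> J" unfolding J_def using sq AI by blast
  qed
  with p obtain L where LB: "L \<in> B" and JL: "J = {x \<in> quotient_space B \<tau>. qle B \<tau> x (qclass B \<tau> L)}"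
    unfolding quotient_sigma_principal_def by blast
  have "qclass B \<tau> L \<in> J" unfolding JL using qclass_in[OF LB] qle_iff[OF sa mx LB LB] sub_refl[OF sa mx]
    by blast
  then obtain A0 where A0: "A0 \<in> I" "sub B \<tau> L A0" using Jiff[OF LB] by blast
  show "\<exists>L\<in>I. \<forall>S\<in>I. negligible B \<tau> (S - L)"
  proof (intro bexI[OF _ A0(1)] ballI)
    fix S assume S: "S \<in> I"
    hence SB: "S \<in> B" using IB by blast
    have "qclass B \<tau> S \<in> J" using Jiff[OF SB] S sub_refl[OF sa mx] by blast
    hence "qle B \<tau> (qclass B \<tau> S) (qclass B \<tau> L)" unfolding JL by blast
    hence "sub B \<tau> S L" using qle_iff[OF sa mx SB LB] by blast
    hence "sub B \<tau> S A0" using sub_trans[OF sa mx _ A0(2)] by blast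
    then obtain N where "negligible B \<tau> N" "S \<subseteq> A0 \<union> N" unfolding sub_def by blast
    thus "negligible B \<tau> (S - A0)" using neg_mono[of B \<tau> N "S - A0"] by blast
  qed
qed

lemma neg_eq:
  assumes "\<forall>A\<in>B. m A = 0 \<longleftrightarrow> \<tau> A = 0"
  shows "negligible B m = negligible B \<tau>"
  using assms unfolding negligible_def by (intro ext) blast

lemma sp_eq:
  assumes "\<forall>A\<in>B. m A = 0 \<longleftrightarrow> \<tau> A = 0"
  shows "sigma_principal B m = sigma_principal B \<tau>"
  unfolding sigma_principal_def neg_eq[OF assms] ..

lemma P4_exists:
  assumes sa: "sigma_algebra E B" and mx: "sigma_maxitive B \<tau>"
  shows "\<exists>m. measure_space E B m \<and> (\<forall>A\<in>B. m A = 0 \<longleftrightarrow> \<tau> A = 0)"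
proof (intro exI conjI)
  define m where "m = (\<lambda>A. if \<tau> A = 0 then 0 else (top::ennreal))"
  show "\<forall>A\<in>B. m A = 0 \<longleftrightarrow> \<tau> A = 0" unfolding m_def by simp
  have e: "\<tau> {} = 0" using mx unfolding sigma_maxitive_def by simp
  have "countably_additive B m"
    unfolding countably_additive_def
  proof (intro allI impI)
    fix A :: "nat \<Rightarrow> 'a set" assume r: "range A \<subseteq> B"
    have tU: "\<tau> (\<Union>i. A i) = (SUP i. \<tau> (A i))" using mx r unfolding sigma_maxitive_def by blast
    show "(\<Sum>i. m (A i)) = m (\<Union>i. A i)"
    proof (cases "\<forall>i. \<tau> (A i) = 0")
      case True
      hence "\<tau> (\<Union>i. A i) = 0" using tU by simp
      thus ?thesis using True unfolding m_def by simp
    next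
      case False
      then obtain j where j: "\<tau> (A j) \<noteq> 0" by blast
      have mj: "m (A j) = top" using j unfolding m_def by simp
      have "(\<Sum>i. m (A i)) = top"
      proof (rule ccontr)
        assume "(\<Sum>i. m (A i)) \<noteq> top"
        hence "(\<Sum>i. m (A i)) < top" by (simp add: top.not_eq_extremum)
        hence "m (A j) < top" by (rule ennreal_suminf_lessD)
        thus False using mj by simp
      qed
      moreover have "\<tau> (A j) \<le> \<tau> (\<Union>i. A i)" unfolding tU by (rule SUP_upper) simp
      hence "\<tau> (\<Union>i. A i) \<noteq> 0" using j by (metis le_zero_eq)
      hence "m (\<Union>i. A i) = top" unfolding m_def by simp
      ultimately show ?thesis by simp
    qed
  qed
  moreover have "positive B m" unfolding positive_def m_def using e by simp
  ultimately show "measure_space E B m" unfolding measure_space_def using sa by blast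
qed

theorem mainTheorem5:
  fixes E :: "'a set" and B :: "'a set set" and \<tau> :: "'a set \<Rightarrow> ennreal"
  assumes "E \<noteq> {}"
    and "sigma_algebra E B"
    and "sigma_maxitive B \<tau>"
  shows "(sigma_principal B \<tau> \<longleftrightarrow> countable_chain_condition B \<tau>)
       \<and> (countable_chain_condition B \<tau> \<longleftrightarrow> quotient_sigma_principal B \<tau>)
       \<and> (quotient_sigma_principal B \<tau> \<longleftrightarrow>
            (\<exists>m. measure_space E B m \<and> sigma_principal B m \<and>
                 (\<forall>A\<in>B. m A = 0 \<longleftrightarrow> \<tau> A = 0)))"
proof -
  note sa = assms(2) and mx = assms(3)
  have 12: "sigma_principal B \<tau> \<longleftrightarrow> countable_chain_condition B \<tau>"
    using P1_P2[OF sa mx] P2_P1[OF sa mx] by blast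
  have 13: "sigma_principal B \<tau> \<longleftrightarrow> quotient_sigma_principal B \<tau>"
    using P1_P3[OF sa mx] P3_P1[OF sa mx] by blast
  have 14: "sigma_principal B \<tau> \<longleftrightarrow> (\<exists>m. measure_space E B m \<and> sigma_principal B m \<and>
                 (\<forall>A\<in>B. m A = 0 \<longleftrightarrow> \<tau> A = 0))"
  proof
    assume p: "sigma_principal B \<tau>"
    obtain m where "measure_space E B m" "\<forall>A\<in>B. m A = 0 \<longleftrightarrow> \<tau> A = 0"
      using P4_exists[OF sa mx] by blast
    thus "\<exists>m. measure_space E B m \<and> sigma_principal B m \<and> (\<forall>A\<in>B. m A = 0 \<longleftrightarrow> \<tau> A = 0)"
      using p sp_eq by blast
  next
    assume "\<exists>m. measure_space E B m \<and> sigma_principal B m \<and> (\<forall>A\<in>B. m A = 0 \<longleftrightarrow> \<tau> A = 0)"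
    then obtain m where "sigma_principal B m" "\<forall>A\<in>B. m A = 0 \<longleftrightarrow> \<tau> A = 0" by blast
    thus "sigma_principal B \<tau>" using sp_eq by blast
  qed
  show ?thesis using 12 13 14 by blast
qed

end
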